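(* Let $\mathcal{A}=\langle L,\mathcal{X},E\rangle$ be a timed automaton with $n$ clocks and $\ell_0,\ell\in L$. Then $$\{\nu\in\mathbb{R}_{\ge0}^{\mathcal{X}}: \text{there is a run of }\mathcal{A}\text{ from }\langle\ell_0,\mathbf{0}\rangle\text{ to }\langle\ell,\nu\rangle\}=\bigcup_{Z\in\mathcal{Z}_1(\mathcal{X})}\ \bigcup_{\gamma\subseteq\mathcal{X}}\{\upsilon+\mu:\mu\in Z,\ \upsilon\in\mathbb{N}^{\mathcal{X}},\ \langle\ell_0,\mathbf{0},\{\mathbf{0}\},\gamma\rangle\to^*\langle\ell,\upsilon,Z,\emptyset\rangle\text{ in }R(\mathcal{A})\},$$ where $\to^*$ denotes existence of a run of $R(\mathcal{A})$ (on any word).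
   Context: Let $\mathcal{X}$ be a finite set of clocks. Clock constraints $\Phi(\mathcal{X})$ are generated by $\varphi ::= \mathbf{true}\mid x<k\mid x=k\mid x>k\mid \varphi\wedge\varphi$ with $k\in\mathbb{N}$, $x\in\mathcal{X}$. A clock valuation is a map $\nu:\mathcal{X}\to\mathbb{R}_{\ge0}$; $\nu\models\varphi$ denotes satisfaction; $\mathbf{0}$ is the all-zero valuation; $(\nu+t)(x)=\nu(x)+t$ for $t\ge0$; for $\lambda\subseteq\mathcal{X}$, $\nu[\lambda\leftarrow0]$ sets clocks in $\lambda$ to $0$ and leaves others unchanged. A timed automaton is $\mathcal{A}=\langle L,\mathcal{X},E\rangle$ with finite location set $L$, finite clock set $\mathcal{X}$, and edges $E\subseteq L\times\Phi(\mathcal{X})\times2^{\mathcal{X}}\times L$. A configuration is a pair $\langle\ell,\nu\rangle$. Transitions: delay $\langle\ell,\nu\rangle\xrightarrow{d}\langle\ell,\nu+d\rangle$ for $d\ge0$; discrete $\langle\ell,\nu\rangle\xrightarrow{0}\langle\ell',\nu[\lambda\leftarrow0]\rangle$ whenever $\langle\ell,\varphi,\lambda,\ell'\rangle\in E$ and $\nu\models\varphi$. A run is a finite (possibly empty) sequence of consecutive transitions. A 1-bounded zone is a subset of $[0,1]^{\mathcal{X}}$ defined by a finite conjunction of constraints $x_i\bowtie c$ and $x_i-x_j\bowtie c$ with $c\in\{-1,0,1\}$ and $\bowtie\in\{<,\le,=,\ge,>\}$; $\mathcal{Z}_1(\mathcal{X})$ is the (finite) set of 1-bounded zones. For a set $Z$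 of valuations, $Z[\lambda\leftarrow0]=\{\nu[\lambda\leftarrow0]:\nu\in Z\}$ and $\overrightarrow{Z}=\{\nu+t:\nu\in Z,t\ge0\}\cap[0,1]^{\mathcal{X}}$; $[\![x=1]\!]$ is the set of valuations with $x=1$; for $\upsilon\in\mathbb{N}^{\mathcal{X}}$, $\upsilon[x\leftarrow x+1]$ increments coordinate $x$ by one. The automaton $R(\mathcal{A})$ is the (infinite-state, nondeterministic, with $\varepsilon$-transitions) automaton over alphabet $\mathcal{X}$ with states $Q=L\times\mathbb{N}^{\mathcal{X}}\times\mathcal{Z}_1(\mathcal{X})\times2^{\mathcal{X}}$ and transitions: (1) delay: $\langle\ell,\upsilon,Z,\gamma\rangle\xrightarrow{\varepsilon}\langle\ell,\upsilon,\overrightarrow{Z},\gamma\rangle$; (2) wrapping, for each $x\in\mathcal{X}$: $\langle\ell,\upsilon,Z,\gamma\rangle\xrightarrow{\sigma}\langle\ell,\upsilon[x\leftarrow x+1],(Z\cap[\![x=1]\!])[x\leftarrow0],\gamma\rangle$, where $\sigma=\varepsilon$ if $x\in\gamma$ and $\sigma=x$ otherwise; (3) for each edge $\langle\ell,\varphi,\lambda,\ell'\rangle\in E$ and each $\gamma'$ with $\gamma'\cup\lambda=\gamma$: $\langle\ell,\upsilon,Z,\gamma\rangle\xrightarrow{\varepsilon}\langle\ell',\upsilon[\lambda\leftarrow0],\{\nu\in Z:\upsilon+\nu\models\varphi\}[\lambda\leftarrow0],\gamma'\rangle$. *)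

theory Defs
  imports Complex_Main
begin

text \<open>Clocks are the elements of a finite type 'c (so the clock set X is UNIV :: 'c set).
  Valuations are maps 'c => real.\<close>

datatype 'c clock_constraint =
    CTrue
  | CLt 'c nat
  | CEq 'c nat
  | CGt 'c nat
  | CAnd "'c clock_constraint" "'c clock_constraint"

fun cc_sat :: "('c \<Rightarrow> real) \<Rightarrow> 'c clock_constraint \<Rightarrow> bool" where
  "cc_sat \<nu> CTrue = True"
| "cc_sat \<nu> (CLt x k) = (\<nu> x < real k)"
| "cc_sat \<nu> (CEq x k) = (\<nu> x = real k)"
| "cc_sat \<nu> (CGt x k) = (\<nu> x > real k)"
| "cc_sat \<nu> (CAnd \<phi> \<psi>) = (cc_sat \<nu> \<phi> \<and> cc_sat \<nu> \<psi>)"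

record ('l, 'c) ta =
  locs :: "'l set"
  edges :: "('l \<times> 'c clock_constraint \<times> 'c set \<times> 'l) set"

definition ta_wf :: "('l, 'c) ta \<Rightarrow> bool" where
  "ta_wf A \<longleftrightarrow> finite (locs A) \<and> finite (edges A) \<and>
     (\<forall>(l, g, r, l') \<in> edges A. l \<in> locs A \<and> l' \<in> locs A)"

definition reset :: "('c \<Rightarrow> 'a::zero) \<Rightarrow> 'c set \<Rightarrow> 'c \<Rightarrow> 'a" where
  "reset \<nu> r = (\<lambda>x. if x \<in> r then 0 else \<nu> x)"

definition delay :: "('c \<Rightarrow> real) \<Rightarrow> real \<Rightarrow> 'c \<Rightarrow> real" where
  "delay \<nu> t = (\<lambda>x. \<nu> x + t)"

inductive ta_step :: "('l, 'c) ta \<Rightarrow> 'l \<times> ('c \<Rightarrow> real) \<Rightarrow> 'l \<times> ('c \<Rightarrow> real) \<Rightarrow> bool"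
  for A where
  ta_delay: "d \<ge> 0 \<Longrightarrow> ta_step A (l, \<nu>) (l, delay \<nu> d)"
| ta_disc: "(l, \<phi>, r, l') \<in> edges A \<Longrightarrow> cc_sat \<nu> \<phi> \<Longrightarrow> ta_step A (l, \<nu>) (l', reset \<nu> r)"

definition ta_run :: "('l, 'c) ta \<Rightarrow> 'l \<times> ('c \<Rightarrow> real) \<Rightarrow> 'l \<times> ('c \<Rightarrow> real) \<Rightarrow> bool" where
  "ta_run A = (ta_step A)\<^sup>*\<^sup>*"

datatype cmp = CmpLt | CmpLe | CmpEq | CmpGe | CmpGt

fun cmp_sem :: "cmp \<Rightarrow> real \<Rightarrow> real \<Rightarrow> bool" where
  "cmp_sem CmpLt a b = (a < b)"
| "cmp_sem CmpLe a b = (a \<le> b)"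
| "cmp_sem CmpEq a b = (a = b)"
| "cmp_sem CmpGe a b = (a \<ge> b)"
| "cmp_sem CmpGt a b = (a > b)"

datatype 'c zone_atom = ZSingle 'c cmp int | ZDiff 'c 'c cmp int

fun zatom_sat :: "('c \<Rightarrow> real) \<Rightarrow> 'c zone_atom \<Rightarrow> bool" where
  "zatom_sat \<nu> (ZSingle x b c) = cmp_sem b (\<nu> x) (of_int c)"
| "zatom_sat \<nu> (ZDiff x y b c) = cmp_sem b (\<nu> x - \<nu> y) (of_int c)"

fun zatom_const :: "'c zone_atom \<Rightarrow> int" where
  "zatom_const (ZSingle x b c) = c"
| "zatom_const (ZDiff x y b c) = c"

definition unit_box :: "('c \<Rightarrow> real) set" where
  "unit_box = {\<nu>. \<forall>x. 0 \<le> \<nu> x \<and> \<nu> x \<le> 1}"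

definition zone_of :: "'c zone_atom set \<Rightarrow> ('c \<Rightarrow> real) set" where
  "zone_of C = {\<nu> \<in> unit_box. \<forall>a \<in> C. zatom_sat \<nu> a}"

definition zones1 :: "('c \<Rightarrow> real) set set" where
  "zones1 = {zone_of C | C. finite C \<and> (\<forall>a \<in> C. zatom_const a \<in> {-1, 0, 1})}"

definition zreset :: "('c \<Rightarrow> real) set \<Rightarrow> 'c set \<Rightarrow> ('c \<Rightarrow> real) set" where
  "zreset Z r = (\<lambda>\<nu>. reset \<nu> r) ` Z"

definition zfuture :: "('c \<Rightarrow> real) set \<Rightarrow> ('c \<Rightarrow> real) set" where
  "zfuture Z = {delay \<nu> t | \<nu> t. \<nu> \<in> Z \<and> t \<ge> 0} \<inter> unit_box"

definition add_int :: "('c \<Rightarrow> nat) \<Rightarrow> ('c \<Rightarrow> real) \<Rightarrow> 'c \<Rightarrow> real" where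
  "add_int \<upsilon> \<nu> = (\<lambda>x. real (\<upsilon> x) + \<nu> x)"

text \<open>The automaton R(A); states (l, upsilon, Z, gamma). Transition labels are omitted
  since only reachability on an arbitrary word is needed.\<close>
inductive R_step :: "('l, 'c) ta \<Rightarrow> 'l \<times> ('c \<Rightarrow> nat) \<times> ('c \<Rightarrow> real) set \<times> 'c set
      \<Rightarrow> 'l \<times> ('c \<Rightarrow> nat) \<times> ('c \<Rightarrow> real) set \<times> 'c set \<Rightarrow> bool"
  for A where
  R_delay: "R_step A (l, \<upsilon>, Z, \<gamma>) (l, \<upsilon>, zfuture Z, \<gamma>)"
| R_wrap: "R_step A (l, \<upsilon>, Z, \<gamma>)
     (l, \<upsilon>(x := \<upsilon> x + 1), zreset (Z \<inter> {\<nu>. \<nu> x = 1}) {x}, \<gamma>)"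
| R_edge: "(l, \<phi>, r, l') \<in> edges A \<Longrightarrow> \<gamma>' \<union> r = \<gamma> \<Longrightarrow>
     R_step A (l, \<upsilon>, Z, \<gamma>)
       (l', reset \<upsilon> r, zreset {\<nu> \<in> Z. cc_sat (add_int \<upsilon> \<nu>) \<phi>} r, \<gamma>')"

definition R_reach where
  "R_reach A = (R_step A)\<^sup>*\<^sup>*"

end

theory Submission
  imports Defs
begin

fun ev :: "('c \<Rightarrow> real) \<Rightarrow> 'c option \<Rightarrow> real" where
  "ev \<mu> None = 0"
| "ev \<mu> (Some x) = \<mu> x"

fun lt :: "bool \<Rightarrow> real \<Rightarrow> real \<Rightarrow> bool" where
  "lt True a b = (a < b)"
| "lt False a b = (a \<le> b)"

definition valid :: "('c \<Rightarrow> real) set \<Rightarrow> 'c option \<Rightarrow> 'c option \<Rightarrow> bool \<Rightarrow> int \<Rightarrow> bool" where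
  "valid Z u v s c = (\<forall>\<mu>\<in>Z. lt s (ev \<mu> u - ev \<mu> v) (of_int c))"

definition good :: "('c \<Rightarrow> real) set \<Rightarrow> bool" where
  "good Z = (Z \<subseteq> unit_box \<and> (\<forall>\<nu>\<in>unit_box.
      (\<forall>u v s c. c \<in> {-1,0,1} \<longrightarrow> valid Z u v s c \<longrightarrow> lt s (ev \<nu> u - ev \<nu> v) (of_int c)) \<longrightarrow> \<nu> \<in> Z))"

lemma lt_add: "lt s1 a c1 \<Longrightarrow> lt s2 b c2 \<Longrightarrow> lt (s1 \<or> s2) (a + b) (c1 + c2)"
  by (cases s1; cases s2; auto)

lemma lt_mono: "lt s a c \<Longrightarrow> b \<le> a \<Longrightarrow> lt s b c"
  by (cases s; auto)

lemma lt_weak: "lt s a c \<Longrightarrow> a \<le> c"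
  by (cases s; auto)

lemma lt_shift: "lt s (a - b) c = lt s (a - c) b" "lt s (a - b) c = lt s a (b + c)"
  by (cases s; auto)+

lemma ev_box: "\<nu> \<in> unit_box \<Longrightarrow> 0 \<le> ev \<nu> u \<and> ev \<nu> u \<le> 1"
  by (cases u) (auto simp: unit_box_def)

lemma lt_strong: "lt s a c \<Longrightarrow> c < a \<Longrightarrow> False"
  by (cases s; auto)

lemma valid_ext:
  assumes "Z \<subseteq> unit_box" "Z \<noteq> {}" "\<nu> \<in> unit_box"
    and H: "\<forall>u v s c. c \<in> {-1,0,1} \<longrightarrow> valid Z u v s c \<longrightarrow> lt s (ev \<nu> u - ev \<nu> v) (of_int c)"
    and V: "valid Z u v s c"
  shows "lt s (ev \<nu> u - ev \<nu> v) (of_int c)"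
proof -
  consider "c \<ge> 2" | "c \<le> -2" | "c \<in> {-1,0,1}" by force
  then show ?thesis
  proof cases
    case 1
    have "(2::real) \<le> of_int c" using 1 by simp
    then have "ev \<nu> u - ev \<nu> v < of_int c" using ev_box[OF assms(3), of u] ev_box[OF assms(3), of v]
      by linarith
    then show ?thesis by (cases s) auto
  next
    case 2
    obtain \<mu> where m: "\<mu> \<in> Z" using assms(2) by auto
    then have "\<mu> \<in> unit_box" using assms(1) by auto
    have "of_int c \<le> (-2::real)" using 2 by simp
    then have "of_int c < ev \<mu> u - ev \<mu> v" using ev_box[OF \<open>\<mu> \<in> unit_box\<close>, of u] ev_box[OF \<open>\<mu> \<in> unit_box\<close>, of v]
      by linarith
    moreover have "lt s (ev \<mu> u - ev \<mu> v) (of_int c)" using V m unfolding valid_def by auto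
    ultimately show ?thesis using lt_strong by blast
  next
    case 3 then show ?thesis using H V by blast
  qed
qed

lemma good_empty: "good {}"
proof -
  have "valid {} None None True 0" by (simp add: valid_def)
  then show ?thesis unfolding good_def by force
qed

lemma good_elim: "good Z \<Longrightarrow> \<nu> \<in> unit_box \<Longrightarrow>
   (\<And>u v s c. c \<in> {-1,0,1} \<Longrightarrow> valid Z u v s c \<Longrightarrow> lt s (ev \<nu> u - ev \<nu> v) (of_int c)) \<Longrightarrow> \<nu> \<in> Z"
  unfolding good_def by blast

lemma good_intro:
  assumes "Z \<subseteq> unit_box"
    and "\<And>\<nu>. Z \<noteq> {} \<Longrightarrow> \<nu> \<in> unit_box \<Longrightarrow> (\<And>u v s c. valid Z u v s c \<Longrightarrow> lt s (ev \<nu> u - ev \<nu> v) (of_int c)) \<Longrightarrow> \<nu> \<in> Z"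
  shows "good Z"
proof (cases "Z = {}")
  case True then show ?thesis using good_empty by simp
next
  case False
  show ?thesis unfolding good_def
  proof (intro conjI assms(1) ballI impI)
    fix \<nu> assume n: "\<nu> \<in> unit_box" and H: "\<forall>u v s c. c \<in> {-1,0,1} \<longrightarrow> valid Z u v s c \<longrightarrow> lt s (ev \<nu> u - ev \<nu> v) (of_int c)"
    show "\<nu> \<in> Z" by (rule assms(2)[OF False n]) (rule valid_ext[OF assms(1) False n H])
  qed
qed

lemma cmp_univ: "(UNIV :: cmp set) = {CmpLt, CmpLe, CmpEq, CmpGe, CmpGt}"
  using cmp.exhaust by auto

lemma atom_exists:
  assumes "c \<in> {-1,0,1}"
  shows "\<exists>a::'c zone_atom. zatom_const a \<in> {-1,0,1} \<and> (\<forall>\<mu>. zatom_sat \<mu> a \<longleftrightarrow> lt s (ev \<mu> u - ev \<mu> v) (of_int c))"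
proof (cases u)
  case None
  show ?thesis
  proof (cases v)
    case None
    show ?thesis
      by (rule exI[of _ "ZDiff undefined undefined (if s then CmpLt else CmpLe) c"])
         (use assms \<open>u = None\<close> None in \<open>cases s; auto\<close>)
  next
    case (Some y)
    show ?thesis
      by (rule exI[of _ "ZSingle y (if s then CmpGt else CmpGe) (-c)"])
         (use assms \<open>u = None\<close> Some in \<open>cases s; auto\<close>)
  qed
next
  case (Some x)
  show ?thesis
  proof (cases v)
    case None
    show ?thesis
      by (rule exI[of _ "ZSingle x (if s then CmpLt else CmpLe) c"])
         (use assms \<open>u = Some x\<close> None in \<open>cases s; auto\<close>)
  next
    case (Some y)
    show ?thesis
      by (rule exI[of _ "ZDiff x y (if s then CmpLt else CmpLe) c"])
         (use assms \<open>u = Some x\<close> Some in \<open>cases s; auto\<close>)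
  qed
qed

lemma finite_atoms: "finite {a::('c::finite) zone_atom. zatom_const a \<in> {-1,0,1}}"
proof -
  have "{a::'c zone_atom. zatom_const a \<in> {-1,0,1}} \<subseteq>
     (\<lambda>(x,b,c). ZSingle x b c) ` (UNIV \<times> UNIV \<times> {-1,0,1}) \<union>
     (\<lambda>(x,y,b,c). ZDiff x y b c) ` (UNIV \<times> UNIV \<times> UNIV \<times> {-1,0,1})"
  proof
    fix a :: "'c zone_atom" assume "a \<in> {a. zatom_const a \<in> {-1,0,1}}"
    then show "a \<in> (\<lambda>(x,b,c). ZSingle x b c) ` (UNIV \<times> UNIV \<times> {-1,0,1}) \<union>
     (\<lambda>(x,y,b,c). ZDiff x y b c) ` (UNIV \<times> UNIV \<times> UNIV \<times> {-1,0,1})"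
    proof (cases a)
      case (ZSingle x b c)
      then show ?thesis using \<open>a \<in> _\<close>
        by (intro UnI1 image_eqI[of _ _ "(x,b,c)"]) auto
    next
      case (ZDiff x y b c)
      then show ?thesis using \<open>a \<in> _\<close>
        by (intro UnI2 image_eqI[of _ _ "(x,y,b,c)"]) auto
    qed
  qed
  moreover have "finite (UNIV :: cmp set)" by (simp add: cmp_univ)
  moreover have "finite ((\<lambda>(x,b,c). ZSingle x b c) ` ((UNIV::'c set) \<times> (UNIV::cmp set) \<times> {-1::int,0,1}) \<union>
     (\<lambda>(x,y,b,c). ZDiff x y b c) ` ((UNIV::'c set) \<times> (UNIV::'c set) \<times> (UNIV::cmp set) \<times> {-1::int,0,1}))"
    using \<open>finite (UNIV :: cmp set)\<close> by (intro finite_UnI finite_imageI finite_SigmaI) auto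
  ultimately show ?thesis by (meson finite_subset)
qed

lemma good_zones1:
  assumes "good (Z :: ('c::finite \<Rightarrow> real) set)"
  shows "Z \<in> zones1"
proof -
  define C where "C = {a::'c zone_atom. zatom_const a \<in> {-1,0,1} \<and> (\<forall>\<mu>\<in>Z. zatom_sat \<mu> a)}"
  have fC: "finite C" by (rule finite_subset[OF _ finite_atoms]) (auto simp: C_def)
  have "Z = zone_of C"
  proof
    show "Z \<subseteq> zone_of C" using assms unfolding good_def zone_of_def C_def by auto
  next
    show "zone_of C \<subseteq> Z"
    proof
      fix \<nu> assume n: "\<nu> \<in> zone_of C"
      then have nb: "\<nu> \<in> unit_box" by (simp add: zone_of_def)
      have "lt s (ev \<nu> u - ev \<nu> v) (of_int c)" if c: "c \<in> {-1,0,1}" and V: "valid Z u v s c" for u v s c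
      proof -
        obtain a :: "'c zone_atom" where a: "zatom_const a \<in> {-1,0,1}"
          "\<And>\<mu>. zatom_sat \<mu> a \<longleftrightarrow> lt s (ev \<mu> u - ev \<mu> v) (of_int c)"
          using atom_exists[OF c] by blast
        have "a \<in> C" using a V by (auto simp: C_def valid_def)
        then show ?thesis using n a by (auto simp: zone_of_def)
      qed
      then show "\<nu> \<in> Z" using assms nb unfolding good_def by blast
    qed
  qed
  then show ?thesis using fC unfolding zones1_def C_def by blast
qed

lemma good_init: "good {(\<lambda>_. 0) :: 'c \<Rightarrow> real}"
  unfolding good_def
proof (intro conjI ballI impI)
  show "{\<lambda>_. 0} \<subseteq> (unit_box :: ('c \<Rightarrow> real) set)" by (auto simp: unit_box_def)
  fix \<nu> :: "'c \<Rightarrow> real" assume n: "\<nu> \<in> unit_box" and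
    H: "\<forall>u v s c. c \<in> {-1,0,1} \<longrightarrow> valid {\<lambda>_. 0} u v s c \<longrightarrow> lt s (ev \<nu> u - ev \<nu> v) (of_int c)"
  have "\<nu> x = 0" for x
  proof -
    have "valid {\<lambda>_. 0} (Some x) None False 0" by (simp add: valid_def)
    then have "\<nu> x \<le> 0" using H by fastforce
    then show ?thesis using n by (auto simp: unit_box_def intro: antisym)
  qed
  then show "\<nu> \<in> {\<lambda>_. 0}" by auto
qed

lemma good_inter:
  assumes "good Z"
  shows "good {\<mu> \<in> Z. lt s (ev \<mu> u - ev \<mu> v) (of_int c)}" (is "good ?Z")
proof (rule good_intro)
  show "?Z \<subseteq> unit_box" using assms by (auto simp: good_def)
  fix \<nu> assume ne: "?Z \<noteq> {}" and n: "\<nu> \<in> unit_box"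
    and H: "\<And>u v s c. valid ?Z u v s c \<Longrightarrow> lt s (ev \<nu> u - ev \<nu> v) (of_int c)"
  have "\<nu> \<in> Z"
  proof -
    have "\<forall>u v s c. c \<in> {-1,0,1} \<longrightarrow> valid Z u v s c \<longrightarrow> lt s (ev \<nu> u - ev \<nu> v) (of_int c)"
      using H by (auto simp: valid_def)
    then show ?thesis using assms n by (auto simp: good_def)
  qed
  moreover have "lt s (ev \<nu> u - ev \<nu> v) (of_int c)" using H[of u v s c] by (auto simp: valid_def)
  ultimately show "\<nu> \<in> ?Z" by simp
qed

lemma exists_between:
  fixes L U :: "(real \<times> bool) set"
  assumes fL: "finite L" and fU: "finite U" and neL: "L \<noteq> {}" and neU: "U \<noteq> {}"
    and P: "\<And>a s1 b s2. (a, s1) \<in> L \<Longrightarrow> (b, s2) \<in> U \<Longrightarrow> lt (s1 \<or> s2) a b"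
  shows "\<exists>t. (\<forall>(a,s)\<in>L. lt s a t) \<and> (\<forall>(b,s)\<in>U. lt s t b)"
proof -
  define A where "A = Max (fst ` L)"
  define B where "B = Min (fst ` U)"
  have "A \<in> fst ` L" using Max_in[of "fst ` L"] fL neL unfolding A_def by simp
  then obtain sa where sa: "(A, sa) \<in> L" by force
  have "B \<in> fst ` U" using Min_in[of "fst ` U"] fU neU unfolding B_def by simp
  then obtain sb where sb: "(B, sb) \<in> U" by force
  have Ale: "a \<le> A" if "(a, s) \<in> L" for a s using that fL unfolding A_def
    by (metis Max_ge finite_imageI fst_conv image_eqI)
  have Bge: "B \<le> b" if "(b, s) \<in> U" for b s using that fU unfolding B_def
    by (metis Min_le finite_imageI fst_conv image_eqI)
  have AB: "A \<le> B" using P[OF sa sb] lt_weak by blast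
  show ?thesis
  proof (cases "A < B")
    case True
    show ?thesis
    proof (rule exI[of _ "(A + B) / 2"], intro conjI ballI)
      fix p assume "p \<in> L" then obtain a s where "p = (a, s)" "(a,s) \<in> L" by (cases p) auto
      then show "case p of (a, s) \<Rightarrow> lt s a ((A + B) / 2)" using Ale[of a s] True by (cases s) auto
    next
      fix p assume "p \<in> U" then obtain a s where "p = (a, s)" "(a,s) \<in> U" by (cases p) auto
      then show "case p of (a, s) \<Rightarrow> lt s ((A + B) / 2) a" using Bge[of a s] True by (cases s) auto
    qed
  next
    case False
    then have E: "A = B" using AB by auto
    show ?thesis
    proof (rule exI[of _ A], intro conjI ballI)
      fix p assume "p \<in> L" then obtain a s where p: "p = (a, s)" "(a,s) \<in> L" by (cases p) auto
      show "case p of (a, s) \<Rightarrow> lt s a A"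
      proof (cases "a = A")
        case True
        then have "lt (s \<or> sb) A A" using P[OF p(2) sb] E by simp
        then have "\<not> s" by auto
        then show ?thesis using p True by simp
      next
        case False then show ?thesis using p Ale[of a s] by (cases s) auto
      qed
    next
      fix p assume "p \<in> U" then obtain a s where p: "p = (a, s)" "(a,s) \<in> U" by (cases p) auto
      show "case p of (a, s) \<Rightarrow> lt s A a"
      proof (cases "a = B")
        case True
        then have "lt (sa \<or> s) A A" using P[OF sa p(2)] E by simp
        then have "\<not> s" by auto
        then show ?thesis using p True E by simp
      next
        case False then show ?thesis using p Bge[of a s] E by (cases s) auto
      qed
    qed
  qed
qed

lemma ev_upd: "ev (\<nu>(x := t)) u = (if u = Some x then t else ev \<nu> u)"
  by (cases u) auto

lemma ev_reset1: "ev (reset \<mu> {x}) u = (if u = Some x then 0 else ev \<mu> u)"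
  by (cases u) (auto simp: reset_def)

lemma reset_box: "\<mu> \<in> unit_box \<Longrightarrow> reset \<mu> r \<in> unit_box"
  by (auto simp: unit_box_def reset_def)

lemma valid_nonempty: "valid Z u u s c \<Longrightarrow> Z \<noteq> {} \<Longrightarrow> lt s 0 (of_int c)"
  by (auto simp: valid_def)

lemma finite_opts: "finite {(u::'c::finite option, s::bool, c::int). c \<in> {-1,0,1} \<and> P u s c}"
proof -
  have "{(u::'c option, s::bool, c::int). c \<in> {-1,0,1} \<and> P u s c} \<subseteq> UNIV \<times> UNIV \<times> {-1,0,1}" by auto
  moreover have "finite ((UNIV :: 'c option set) \<times> (UNIV :: bool set) \<times> {-1::int,0,1})" by simp
  ultimately show ?thesis by (meson finite_subset)
qed

lemma good_reset1:
  assumes g: "good (Z :: ('c::finite \<Rightarrow> real) set)"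
  shows "good (zreset Z {x})"
proof (rule good_intro)
  have Zb: "Z \<subseteq> unit_box" using g by (simp add: good_def)
  then show "zreset Z {x} \<subseteq> unit_box" by (auto simp: zreset_def reset_box)
  fix \<nu> assume ne': "zreset Z {x} \<noteq> {}" and n: "\<nu> \<in> unit_box"
    and H: "\<And>u v s c. valid (zreset Z {x}) u v s c \<Longrightarrow> lt s (ev \<nu> u - ev \<nu> v) (of_int c)"
  have ne: "Z \<noteq> {}" using ne' by (auto simp: zreset_def)
  have VZ': "valid (zreset Z {x}) u v s c" if "valid Z u v s c" "u \<noteq> Some x" "v \<noteq> Some x" for u v s c
    using that by (auto simp: valid_def zreset_def ev_reset1)
  define L where "L = (\<lambda>(u,s,c). (ev \<nu> u - of_int c, s)) ` {(u,s,c). c \<in> {-1,0,1} \<and> (u \<noteq> Some x \<and> valid Z u (Some x) s c)}"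
  define U where "U = (\<lambda>(v,s,c). (ev \<nu> v + of_int c, s)) ` {(v,s,c). c \<in> {-1,0,1} \<and> (v \<noteq> Some x \<and> valid Z (Some x) v s c)}"
  have v0: "valid Z None (Some x) False 0" using Zb by (auto simp: valid_def unit_box_def)
  have v1: "valid Z (Some x) None False 1" using Zb by (auto simp: valid_def unit_box_def)
  have L0: "(0, False) \<in> L" unfolding L_def using v0 by (intro image_eqI[of _ _ "(None, False, 0)"]) auto
  have U1: "(1, False) \<in> U" unfolding U_def using v1 by (intro image_eqI[of _ _ "(None, False, 1)"]) auto
  have "\<exists>t. (\<forall>(a,s)\<in>L. lt s a t) \<and> (\<forall>(b,s)\<in>U. lt s t b)"
  proof (rule exists_between)
    show "finite L" unfolding L_def by (intro finite_imageI finite_opts)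
    show "finite U" unfolding U_def by (intro finite_imageI finite_opts)
    show "L \<noteq> {}" using L0 by auto
    show "U \<noteq> {}" using U1 by auto
    fix a s1 b s2 assume a: "(a, s1) \<in> L" and b: "(b, s2) \<in> U"
    obtain u c1 where u: "a = ev \<nu> u - of_int c1" "u \<noteq> Some x" "valid Z u (Some x) s1 c1"
      using a unfolding L_def by auto
    obtain v c2 where v: "b = ev \<nu> v + of_int c2" "v \<noteq> Some x" "valid Z (Some x) v s2 c2"
      using b unfolding U_def by auto
    have "valid Z u v (s1 \<or> s2) (c1 + c2)"
      unfolding valid_def
    proof
      fix \<mu> assume "\<mu> \<in> Z"
      then have "lt (s1 \<or> s2) ((ev \<mu> u - ev \<mu> (Some x)) + (ev \<mu> (Some x) - ev \<mu> v)) (of_int c1 + of_int c2)"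
        using u(3) v(3) by (intro lt_add) (auto simp: valid_def)
      then show "lt (s1 \<or> s2) (ev \<mu> u - ev \<mu> v) (of_int (c1 + c2))" by simp
    qed
    then have "lt (s1 \<or> s2) (ev \<nu> u - ev \<nu> v) (of_int (c1 + c2))" using H VZ' u(2) v(2) by blast
    then show "lt (s1 \<or> s2) a b" using u(1) v(1) by (cases "s1 \<or> s2") auto
  qed
  then obtain t where tL: "\<forall>(a,s)\<in>L. lt s a t" and tU: "\<forall>(b,s)\<in>U. lt s t b" by blast
  define \<mu> where "\<mu> = \<nu>(x := t)"
  have Lm: "lt s (ev \<nu> u - of_int c) t" if "c \<in> {-1,0,1}" "u \<noteq> Some x" "valid Z u (Some x) s c" for u s c
  proof -
    have "(ev \<nu> u - of_int c, s) \<in> L" unfolding L_def using that by (intro image_eqI[of _ _ "(u,s,c)"]) auto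
    then show ?thesis using tL by auto
  qed
  have Um: "lt s t (ev \<nu> v + of_int c)" if "c \<in> {-1,0,1}" "v \<noteq> Some x" "valid Z (Some x) v s c" for v s c
  proof -
    have "(ev \<nu> v + of_int c, s) \<in> U" unfolding U_def using that by (intro image_eqI[of _ _ "(v,s,c)"]) auto
    then show ?thesis using tU by auto
  qed
  have t0: "0 \<le> t" using Lm[of 0 None False] v0 by simp
  have t1: "t \<le> 1" using Um[of 1 None False] v1 by simp
  have mb: "\<mu> \<in> unit_box" using n t0 t1 by (auto simp: \<mu>_def unit_box_def)
  have "\<mu> \<in> Z"
  proof (rule good_elim[OF g mb])
      fix u v s c assume c: "c \<in> {-1::int,0,1}" and V: "valid Z u v s c"
      show "lt s (ev \<mu> u - ev \<mu> v) (of_int c)"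
      proof (cases "u = Some x"; cases "v = Some x")
        assume "u = Some x" "v = Some x"
        then show ?thesis using valid_nonempty[of Z u s c] V ne by (simp)
      next
        assume "u = Some x" "v \<noteq> Some x"
        then show ?thesis using Um[OF c, of v s] V by (simp add: \<mu>_def ev_upd lt_shift add.commute)
      next
        assume "u \<noteq> Some x" "v = Some x"
        then show ?thesis using Lm[OF c, of u s] V by (simp add: \<mu>_def ev_upd lt_shift)
      next
        assume "u \<noteq> Some x" "v \<noteq> Some x"
        then show ?thesis using H VZ' V by (simp add: \<mu>_def ev_upd)
      qed
  qed
  moreover have "\<nu> x \<le> 0"
  proof -
    have "valid (zreset Z {x}) (Some x) None False 0" by (auto simp: valid_def zreset_def reset_def)
    then show ?thesis using H by fastforce
  qed
  then have "\<nu> x = 0" using n by (auto simp: unit_box_def intro: antisym)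
  then have "reset \<mu> {x} = \<nu>" by (auto simp: \<mu>_def reset_def)
  ultimately show "\<nu> \<in> zreset Z {x}" unfolding zreset_def by blast
qed

lemma zreset_insert: "zreset Z (insert x r) = zreset (zreset Z r) {x}"
proof -
  have "reset (reset \<mu> r) {x} = reset \<mu> (insert x r)" for \<mu> :: "'a \<Rightarrow> real"
    by (auto simp: reset_def)
  then show ?thesis unfolding zreset_def image_image by simp
qed

lemma good_reset:
  assumes "good (Z :: ('c::finite \<Rightarrow> real) set)"
  shows "good (zreset Z r)"
proof -
  have "finite r" by simp
  then show ?thesis
  proof (induction r rule: finite_induct)
    case empty
    have "zreset Z {} = Z" by (auto simp: zreset_def reset_def)
    then show ?case using assms by simp
  next
    case (insert x r)
    show ?case by (subst zreset_insert) (rule good_reset1[OF insert.IH])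
  qed
qed

lemma good_future:
  assumes g: "good (Z :: ('c::finite \<Rightarrow> real) set)"
  shows "good (zfuture Z)"
proof (rule good_intro)
  have Zb: "Z \<subseteq> unit_box" using g by (simp add: good_def)
  show "zfuture Z \<subseteq> unit_box" by (auto simp: zfuture_def)
  fix \<nu> assume ne': "zfuture Z \<noteq> {}" and n: "\<nu> \<in> unit_box"
    and H: "\<And>u v s c. valid (zfuture Z) u v s c \<Longrightarrow> lt s (ev \<nu> u - ev \<nu> v) (of_int c)"
  have ne: "Z \<noteq> {}" using ne' by (auto simp: zfuture_def)
  have VZ': "valid (zfuture Z) (Some x) (Some y) s c" if "valid Z (Some x) (Some y) s c" for x y s c
    using that by (auto simp: valid_def zfuture_def delay_def)
  define L where "L = insert (0, False) ((\<lambda>(x,s,c). (\<nu> x - of_int c, s)) ` {(x,s,c). c \<in> {-1,0,1} \<and> valid Z (Some x) None s c})"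
  define U where "U = (\<lambda>(y,s,c). (\<nu> y + of_int c, s)) ` {(y,s,c). c \<in> {-1,0,1} \<and> valid Z None (Some y) s c}"
  have v0: "valid Z None (Some y) False 0" for y using Zb by (auto simp: valid_def unit_box_def)
  have U0: "(\<nu> y, False) \<in> U" for y unfolding U_def using v0 by (intro image_eqI[of _ _ "(y, False, 0)"]) auto
  have fin: "finite {(x::'c, s::bool, c::int). c \<in> {-1,0,1} \<and> P x s c}" for P
  proof -
    have "{(x::'c, s::bool, c::int). c \<in> {-1,0,1} \<and> P x s c} \<subseteq> UNIV \<times> UNIV \<times> {-1,0,1}" by auto
    moreover have "finite ((UNIV :: 'c set) \<times> (UNIV :: bool set) \<times> {-1::int,0,1})" by simp
    ultimately show ?thesis by (meson finite_subset)
  qed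
  have "\<exists>t. (\<forall>(a,s)\<in>L. lt s a t) \<and> (\<forall>(b,s)\<in>U. lt s t b)"
  proof (rule exists_between)
    show "finite L" unfolding L_def by (intro finite_insert[THEN iffD2] finite_imageI fin)
    show "finite U" unfolding U_def by (intro finite_imageI fin)
    show "L \<noteq> {}" by (auto simp: L_def)
    show "U \<noteq> {}" using U0 by auto
    fix a s1 b s2 assume a: "(a, s1) \<in> L" and b: "(b, s2) \<in> U"
    obtain y c2 where v: "b = \<nu> y + of_int c2" "valid Z None (Some y) s2 c2" "c2 \<in> {-1,0,1}"
      using b unfolding U_def by auto
    show "lt (s1 \<or> s2) a b"
    proof (cases "(a, s1) = (0, False)")
      case True
      have "valid (zfuture Z) None (Some y) s2 c2"
        unfolding valid_def
      proof
        fix \<mu>' assume "\<mu>' \<in> zfuture Z"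
        then obtain \<mu> t where m: "\<mu> \<in> Z" "t \<ge> 0" "\<mu>' = delay \<mu> t" by (auto simp: zfuture_def)
        then have "lt s2 (0 - \<mu> y) (of_int c2)" using v(2) by (auto simp: valid_def)
        moreover have "ev \<mu>' None - ev \<mu>' (Some y) \<le> 0 - \<mu> y" using m by (simp add: delay_def)
        ultimately show "lt s2 (ev \<mu>' None - ev \<mu>' (Some y)) (of_int c2)"
          by (rule lt_mono)
      qed
      then have "lt s2 (0 - \<nu> y) (of_int c2)" using H by fastforce
      then show ?thesis using True v(1) by (cases s2) auto
    next
      case False
      then obtain x c1 where u: "a = \<nu> x - of_int c1" "valid Z (Some x) None s1 c1"
        using a unfolding L_def by auto
      have "valid Z (Some x) (Some y) (s1 \<or> s2) (c1 + c2)"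
        unfolding valid_def
      proof
        fix \<mu> assume "\<mu> \<in> Z"
        then have "lt (s1 \<or> s2) ((ev \<mu> (Some x) - ev \<mu> None) + (ev \<mu> None - ev \<mu> (Some y))) (of_int c1 + of_int c2)"
          using u(2) v(2) by (intro lt_add) (auto simp: valid_def)
        then show "lt (s1 \<or> s2) (ev \<mu> (Some x) - ev \<mu> (Some y)) (of_int (c1 + c2))" by simp
      qed
      then have "lt (s1 \<or> s2) (ev \<nu> (Some x) - ev \<nu> (Some y)) (of_int (c1 + c2))" using H VZ' by blast
      then show "lt (s1 \<or> s2) a b" using u(1) v(1) by (cases "s1 \<or> s2") auto
    qed
  qed
  then obtain t where tL: "\<forall>(a,s)\<in>L. lt s a t" and tU: "\<forall>(b,s)\<in>U. lt s t b" by blast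
  define \<mu> where "\<mu> = (\<lambda>x. \<nu> x - t)"
  have Lm: "lt s (\<nu> x - of_int c) t" if "c \<in> {-1,0,1}" "valid Z (Some x) None s c" for x s c
  proof -
    have "(\<nu> x - of_int c, s) \<in> L" unfolding L_def using that by (intro insertI2 image_eqI[of _ _ "(x,s,c)"]) auto
    then show ?thesis using tL by auto
  qed
  have Um: "lt s t (\<nu> y + of_int c)" if "c \<in> {-1,0,1}" "valid Z None (Some y) s c" for y s c
  proof -
    have "(\<nu> y + of_int c, s) \<in> U" unfolding U_def using that by (intro image_eqI[of _ _ "(y,s,c)"]) auto
    then show ?thesis using tU by auto
  qed
  have t0: "0 \<le> t" using tL by (auto simp: L_def)
  have mb: "\<mu> \<in> unit_box"
  proof -
    have "t \<le> \<nu> y" for y using Um[of 0 y False] v0 by simp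
    moreover have "\<nu> y \<le> 1" for y using n by (auto simp: unit_box_def)
    ultimately have "0 \<le> \<nu> y - t \<and> \<nu> y - t \<le> 1" for y using t0 by (smt (verit))
    then show ?thesis by (auto simp: \<mu>_def unit_box_def)
  qed
  have "\<mu> \<in> Z"
  proof (rule good_elim[OF g mb])
    fix u v s c assume c: "c \<in> {-1::int,0,1}" and V: "valid Z u v s c"
    show "lt s (ev \<mu> u - ev \<mu> v) (of_int c)"
    proof (cases u; cases v)
      assume "u = None" "v = None"
      then show ?thesis using valid_nonempty[of Z u s c] V ne by simp
    next
      fix y assume "u = None" "v = Some y"
      then show ?thesis using Um[OF c, of y s] V by (cases s) (auto simp: \<mu>_def)
    next
      fix x assume "u = Some x" "v = None"
      then show ?thesis using Lm[OF c, of x s] V by (cases s) (auto simp: \<mu>_def)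
    next
      fix x y assume "u = Some x" "v = Some y"
      then show ?thesis using H[OF VZ'[of x y s c]] V by (simp add: \<mu>_def)
    qed
  qed
  moreover have "\<nu> = delay \<mu> t" unfolding \<mu>_def delay_def by simp
  ultimately have "\<nu> \<in> {delay \<nu> t |\<nu> t. \<nu> \<in> Z \<and> 0 \<le> t}" using t0 by blast
  then show "\<nu> \<in> zfuture Z" using n unfolding zfuture_def by (rule IntI)
qed

lemma good_wrap:
  assumes "good (Z :: ('c::finite \<Rightarrow> real) set)"
  shows "good (zreset (Z \<inter> {\<nu>. \<nu> x = 1}) {x})"
proof -
  have eq: "Z \<inter> {\<nu>. \<nu> x = 1} = {\<mu> \<in> {\<mu> \<in> Z. lt False (ev \<mu> (Some x) - ev \<mu> None) (of_int 1)}.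
          lt False (ev \<mu> None - ev \<mu> (Some x)) (of_int (-1))}" by auto
  show ?thesis unfolding eq by (intro good_reset1 good_inter assms)
qed

lemma good_guard:
  assumes "good (Z :: ('c::finite \<Rightarrow> real) set)"
  shows "good {\<mu> \<in> Z. cc_sat (add_int \<upsilon> \<mu>) \<phi>}"
  using assms
proof (induction \<phi> arbitrary: Z)
  case CTrue then show ?case by simp
next
  case (CLt x k)
  have eq: "{\<mu> \<in> Z. cc_sat (add_int \<upsilon> \<mu>) (CLt x k)} =
    {\<mu> \<in> Z. lt True (ev \<mu> (Some x) - ev \<mu> None) (of_int (int k - int (\<upsilon> x)))}"
    by (auto simp: add_int_def)
  show ?case unfolding eq by (intro good_inter CLt)
next
  case (CGt x k)
  have eq: "{\<mu> \<in> Z. cc_sat (add_int \<upsilon> \<mu>) (CGt x k)} =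
    {\<mu> \<in> Z. lt True (ev \<mu> None - ev \<mu> (Some x)) (of_int (int (\<upsilon> x) - int k))}"
    by (auto simp: add_int_def)
  show ?case unfolding eq by (intro good_inter CGt)
next
  case (CEq x k)
  have eq: "{\<mu> \<in> Z. cc_sat (add_int \<upsilon> \<mu>) (CEq x k)} =
    {\<mu> \<in> {\<mu> \<in> Z. lt False (ev \<mu> (Some x) - ev \<mu> None) (of_int (int k - int (\<upsilon> x)))}.
      lt False (ev \<mu> None - ev \<mu> (Some x)) (of_int (int (\<upsilon> x) - int k))}"
    by (auto simp: add_int_def)
  show ?case unfolding eq by (intro good_inter CEq)
next
  case (CAnd \<phi>1 \<phi>2)
  have eq: "{\<mu> \<in> Z. cc_sat (add_int \<upsilon> \<mu>) (CAnd \<phi>1 \<phi>2)} =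
    {\<mu> \<in> {\<mu> \<in> Z. cc_sat (add_int \<upsilon> \<mu>) \<phi>1}. cc_sat (add_int \<upsilon> \<mu>) \<phi>2}" by auto
  show ?case unfolding eq by (intro CAnd.IH(2) CAnd.IH(1) CAnd.prems)
qed

definition lf :: "'c set \<Rightarrow> 'l \<times> ('c \<Rightarrow> nat) \<times> ('c \<Rightarrow> real) set \<times> 'c set \<Rightarrow> 'l \<times> ('c \<Rightarrow> nat) \<times> ('c \<Rightarrow> real) set \<times> 'c set" where
  "lf S = (\<lambda>(l, \<upsilon>, Z, \<gamma>). (l, \<upsilon>, Z, \<gamma> \<union> S))"

lemma R_step_lift: "R_step A a b \<Longrightarrow> R_step A (lf S a) (lf S b)"
proof (induction rule: R_step.induct)
  case (R_delay l \<upsilon> Z \<gamma>)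
  then show ?case by (simp add: lf_def R_step.R_delay)
next
  case (R_wrap l \<upsilon> Z \<gamma> x)
  then show ?case using R_step.R_wrap[of A l \<upsilon> Z "\<gamma> \<union> S" x] by (simp add: lf_def)
next
  case (R_edge l \<phi> r l' \<gamma>' \<gamma> \<upsilon> Z)
  have "(\<gamma>' \<union> S) \<union> r = \<gamma> \<union> S" using R_edge(2) by auto
  then show ?case using R_step.R_edge[OF R_edge(1), of "\<gamma>' \<union> S" "\<gamma> \<union> S" \<upsilon> Z] by (simp add: lf_def)
qed

lemma reach_lift: "R_reach A a b \<Longrightarrow> R_reach A (lf S a) (lf S b)"
  unfolding R_reach_def
proof (induction rule: rtranclp_induct)
  case base then show ?case by simp
next
  case (step y z)
  then show ?case using R_step_lift by (metis rtranclp.rtrancl_into_rtrancl)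
qed

lemma delay_sim:
  fixes \<mu> :: "'c::finite \<Rightarrow> real"
  assumes "good Z" "\<mu> \<in> Z" "0 \<le> d"
  shows "\<exists>\<upsilon>' Z' \<mu>'. R_reach A (l,\<upsilon>,Z,\<gamma>) (l,\<upsilon>',Z',\<gamma>) \<and> good Z' \<and> \<mu>' \<in> Z' \<and>
           add_int \<upsilon>' \<mu>' = delay (add_int \<upsilon> \<mu>) d"
proof -
  define P where "P = (\<Sum>x\<in>UNIV. nat \<lfloor>\<mu> x + d\<rfloor>)"
  then show ?thesis using assms
  proof (induction P arbitrary: \<upsilon> Z \<mu> d rule: less_induct)
    case (less P \<upsilon> Z \<mu> d)
    have mb: "\<mu> \<in> unit_box" using less.prems unfolding good_def by auto
    define m where "m = Min (range (\<lambda>x. 1 - \<mu> x))"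
    have mle: "m \<le> 1 - \<mu> y" for y unfolding m_def by (rule Min_le) auto
    have "m \<in> range (\<lambda>x. 1 - \<mu> x)" unfolding m_def by (rule Min_in) auto
    then obtain x where x: "m = 1 - \<mu> x" by auto
    have m0: "0 \<le> m" using x mb by (auto simp: unit_box_def)
    show ?case
    proof (cases "d \<le> m")
      case True
      have "delay \<mu> d \<in> unit_box" using mb mle[of] True less.prems(4)
        by (auto simp: unit_box_def delay_def) (smt (verit) mle)
      then have "delay \<mu> d \<in> zfuture Z" using less.prems(3,4) unfolding zfuture_def by blast
      moreover have "R_reach A (l,\<upsilon>,Z,\<gamma>) (l,\<upsilon>,zfuture Z,\<gamma>)"
        unfolding R_reach_def by (rule r_into_rtranclp) (rule R_delay)
      moreover have "add_int \<upsilon> (delay \<mu> d) = delay (add_int \<upsilon> \<mu>) d"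
        by (auto simp: add_int_def delay_def)
      ultimately show ?thesis using good_future[OF less.prems(2)] by blast
    next
      case False
      define \<mu>1 where "\<mu>1 = delay \<mu> m"
      have "\<mu>1 \<in> unit_box" using mb mle m0 unfolding \<mu>1_def
        by (auto simp: unit_box_def delay_def) (smt (verit) mle)
      then have m1: "\<mu>1 \<in> zfuture Z" using less.prems(3) m0 unfolding zfuture_def \<mu>1_def by blast
      have m1x: "\<mu>1 x = 1" using x by (simp add: \<mu>1_def delay_def)
      define Z2 where "Z2 = zreset (zfuture Z \<inter> {\<nu>. \<nu> x = 1}) {x}"
      define \<upsilon>2 where "\<upsilon>2 = \<upsilon>(x := \<upsilon> x + 1)"
      define \<mu>2 where "\<mu>2 = reset \<mu>1 {x}"
      have m2: "\<mu>2 \<in> Z2" unfolding Z2_def zreset_def \<mu>2_def using m1 m1x by blast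
      have g2: "good Z2" unfolding Z2_def by (intro good_wrap good_future less.prems(2))
      have r2: "R_reach A (l,\<upsilon>,Z,\<gamma>) (l,\<upsilon>2,Z2,\<gamma>)"
        unfolding R_reach_def Z2_def \<upsilon>2_def
        by (rule rtranclp.rtrancl_into_rtrancl[OF r_into_rtranclp[of "R_step A", OF R_delay[of A l \<upsilon> Z \<gamma>]] R_wrap[of A l \<upsilon> "zfuture Z" \<gamma> x]])
      define P2 where "P2 = (\<Sum>y\<in>UNIV. nat \<lfloor>\<mu>2 y + (d - m)\<rfloor>)"
      have "P2 < P" unfolding P2_def less.prems(1)
      proof (rule sum_strict_mono_ex1)
        show "finite (UNIV :: 'c set)" by simp
        show "\<forall>y\<in>UNIV. nat \<lfloor>\<mu>2 y + (d - m)\<rfloor> \<le> nat \<lfloor>\<mu> y + d\<rfloor>"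
        proof
          fix y :: 'c
          show "nat \<lfloor>\<mu>2 y + (d - m)\<rfloor> \<le> nat \<lfloor>\<mu> y + d\<rfloor>"
          proof (cases "y = x")
            case True
            then have "\<mu>2 y + (d - m) \<le> \<mu> y + d" using x
              by (simp add: \<mu>2_def reset_def)
            then show ?thesis by (intro nat_mono floor_mono)
          next
            case False
            then show ?thesis by (simp add: \<mu>2_def \<mu>1_def reset_def delay_def)
          qed
        qed
        have e1: "\<mu> x + d = (d - m) + 1" using x by simp
        have e2: "\<lfloor>(d - m) + 1\<rfloor> = \<lfloor>d - m\<rfloor> + 1" using floor_add_int[of "d - m" 1] by (simp only: of_int_1)
        then have "\<lfloor>\<mu> x + d\<rfloor> = \<lfloor>d - m\<rfloor> + 1" unfolding e1 .
        moreover have "\<mu>2 x = 0" by (simp add: \<mu>2_def reset_def)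
        moreover have "0 \<le> \<lfloor>d - m\<rfloor>" using False by simp
        ultimately show "\<exists>y\<in>UNIV. nat \<lfloor>\<mu>2 y + (d - m)\<rfloor> < nat \<lfloor>\<mu> y + d\<rfloor>"
          by (intro bexI[of _ x]) auto
      qed
      then obtain \<upsilon>' Z' \<mu>' where IH: "R_reach A (l,\<upsilon>2,Z2,\<gamma>) (l,\<upsilon>',Z',\<gamma>)" "good Z'" "\<mu>' \<in> Z'"
          "add_int \<upsilon>' \<mu>' = delay (add_int \<upsilon>2 \<mu>2) (d - m)"
        using less.IH[OF _ P2_def g2 m2] False by fastforce
      have "add_int \<upsilon>2 \<mu>2 = delay (add_int \<upsilon> \<mu>) m"
        using x by (auto simp: add_int_def delay_def \<upsilon>2_def \<mu>2_def \<mu>1_def reset_def)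
      then have "add_int \<upsilon>' \<mu>' = delay (add_int \<upsilon> \<mu>) d"
        using IH(4) by (auto simp: delay_def)
      moreover have "R_reach A (l,\<upsilon>,Z,\<gamma>) (l,\<upsilon>',Z',\<gamma>)"
        using r2 IH(1) unfolding R_reach_def by (rule rtranclp_trans)
      ultimately show ?thesis using IH(2,3) by blast
    qed
  qed
qed

lemma add_int_reset: "add_int (reset \<upsilon> r) (reset \<mu> r) = reset (add_int \<upsilon> \<mu>) r"
  by (auto simp: add_int_def reset_def)

lemma sim:
  fixes A :: "('l, 'c::finite) ta"
  assumes "ta_run A (l0, (\<lambda>_. 0)) c"
  shows "\<exists>\<gamma> \<upsilon> Z \<mu>. R_reach A (l0, (\<lambda>_. 0), {(\<lambda>_. 0)}, \<gamma>) (fst c, \<upsilon>, Z, {}) \<and> good Z \<and> \<mu> \<in> Z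
            \<and> snd c = add_int \<upsilon> \<mu>"
  using assms unfolding ta_run_def
proof (induction rule: rtranclp_induct)
  case base
  have "add_int (\<lambda>_. 0) (\<lambda>_. 0) = (\<lambda>_::'c. 0::real)" by (simp add: add_int_def)
  then show ?case using good_init unfolding R_reach_def by fastforce
next
  case (step b c)
  then obtain \<gamma> \<upsilon> Z \<mu> where IH: "R_reach A (l0, (\<lambda>_. 0), {(\<lambda>_. 0)}, \<gamma>) (fst b, \<upsilon>, Z, {})" "good Z" "\<mu> \<in> Z"
    "snd b = add_int \<upsilon> \<mu>" by blast
  from step(2) show ?case
  proof cases
    case (ta_delay d l \<nu>)
    have "0 \<le> d" by fact
    obtain \<upsilon>' Z' \<mu>' where D: "R_reach A (l,\<upsilon>,Z,{}) (l,\<upsilon>',Z',{})" "good Z'" "\<mu>' \<in> Z'"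
           "add_int \<upsilon>' \<mu>' = delay (add_int \<upsilon> \<mu>) d"
      using delay_sim[OF IH(2,3) \<open>0 \<le> d\<close>, of A l \<upsilon> "{}"] by blast
    have "R_reach A (l0, (\<lambda>_. 0), {(\<lambda>_. 0)}, \<gamma>) (l, \<upsilon>', Z', {})"
      using IH(1) D(1) ta_delay unfolding R_reach_def by auto
    then show ?thesis using D IH(4) ta_delay
      by (intro exI[of _ \<gamma>] exI[of _ \<upsilon>'] exI[of _ Z'] exI[of _ \<mu>']) auto
  next
    case (ta_disc l \<phi> r l' \<nu>)
    have r1: "R_reach A (l0, (\<lambda>_. 0), {(\<lambda>_. 0)}, \<gamma> \<union> r) (l, \<upsilon>, Z, r)"
      using reach_lift[OF IH(1), of r] ta_disc by (simp add: lf_def)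
    have "R_step A (l, \<upsilon>, Z, r) (l', reset \<upsilon> r, zreset {\<nu> \<in> Z. cc_sat (add_int \<upsilon> \<nu>) \<phi>} r, {})"
      by (rule R_edge[OF ta_disc(3)]) simp
    then have "R_reach A (l0, (\<lambda>_. 0), {(\<lambda>_. 0)}, \<gamma> \<union> r) (l', reset \<upsilon> r, zreset {\<nu> \<in> Z. cc_sat (add_int \<upsilon> \<nu>) \<phi>} r, {})"
      using r1 unfolding R_reach_def by auto
    moreover have "good (zreset {\<nu> \<in> Z. cc_sat (add_int \<upsilon> \<nu>) \<phi>} r)"
      by (intro good_reset good_guard IH(2))
    moreover have "reset \<mu> r \<in> zreset {\<nu> \<in> Z. cc_sat (add_int \<upsilon> \<nu>) \<phi>} r"
      using IH(3,4) ta_disc unfolding zreset_def by auto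
    moreover have "snd c = add_int (reset \<upsilon> r) (reset \<mu> r)"
      using IH(4) ta_disc by (simp add: add_int_reset)
    ultimately show ?thesis using ta_disc by fastforce
  qed
qed

lemma sound:
  fixes A :: "('l, 'c) ta"
  assumes "R_reach A (l0, (\<lambda>_. 0), {(\<lambda>_. 0)}, \<gamma>0) s"
  shows "case s of (l, \<upsilon>, Z, \<gamma>) \<Rightarrow> Z \<subseteq> unit_box \<and> (\<forall>\<mu>\<in>Z. ta_run A (l0, (\<lambda>_. 0)) (l, add_int \<upsilon> \<mu>))"
  using assms unfolding R_reach_def
proof (induction rule: rtranclp_induct)
  case base
  have "add_int (\<lambda>_. 0) (\<lambda>_. 0) = (\<lambda>_::'c. 0::real)" by (simp add: add_int_def)
  then show ?case by (auto simp: unit_box_def ta_run_def)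
next
  case (step b c)
  from step(2) show ?case
  proof cases
    case (R_delay l \<upsilon> Z \<gamma>)
    show ?thesis unfolding R_delay(2)
    proof (simp, intro conjI ballI)
      show "zfuture Z \<subseteq> unit_box" by (auto simp: zfuture_def)
      fix \<mu>' assume "\<mu>' \<in> zfuture Z"
      then obtain \<mu> t where m: "\<mu> \<in> Z" "t \<ge> 0" "\<mu>' = delay \<mu> t" by (auto simp: zfuture_def)
      have "ta_run A (l0, (\<lambda>_. 0)) (l, add_int \<upsilon> \<mu>)" using step(3) R_delay(1) m(1) by auto
      moreover have "ta_step A (l, add_int \<upsilon> \<mu>) (l, add_int \<upsilon> \<mu>')"
        using ta_delay[OF m(2), of A l "add_int \<upsilon> \<mu>"] m(3)
        by (simp add: add_int_def delay_def add.assoc)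
      ultimately show "ta_run A (l0, (\<lambda>_. 0)) (l, add_int \<upsilon> \<mu>')"
        unfolding ta_run_def by (rule rtranclp.rtrancl_into_rtrancl)
    qed
  next
    case (R_wrap l \<upsilon> Z \<gamma> x)
    show ?thesis unfolding R_wrap(2)
    proof (simp, intro conjI ballI)
      show "zreset (Z \<inter> {\<nu>. \<nu> x = 1}) {x} \<subseteq> unit_box"
        using step(3) R_wrap(1) by (auto simp: zreset_def reset_box)
      fix \<mu>' assume "\<mu>' \<in> zreset (Z \<inter> {\<nu>. \<nu> x = 1}) {x}"
      then obtain \<mu> where m: "\<mu> \<in> Z" "\<mu> x = 1" "\<mu>' = reset \<mu> {x}" by (auto simp: zreset_def)
      have "add_int (\<upsilon>(x := Suc (\<upsilon> x))) \<mu>' = add_int \<upsilon> \<mu>"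
        using m by (auto simp: add_int_def reset_def)
      then show "ta_run A (l0, (\<lambda>_. 0)) (l, add_int (\<upsilon>(x := Suc (\<upsilon> x))) \<mu>')"
        using step(3) R_wrap(1) m(1) by auto
    qed
  next
    case (R_edge l \<phi> r l' \<gamma>' \<gamma> \<upsilon> Z)
    show ?thesis unfolding R_edge(2)
    proof (simp, intro conjI ballI)
      show "zreset {\<nu> \<in> Z. cc_sat (add_int \<upsilon> \<nu>) \<phi>} r \<subseteq> unit_box"
        using step(3) R_edge(1) by (auto simp: zreset_def reset_box)
      fix \<mu>' assume "\<mu>' \<in> zreset {\<nu> \<in> Z. cc_sat (add_int \<upsilon> \<nu>) \<phi>} r"
      then obtain \<mu> where m: "\<mu> \<in> Z" "cc_sat (add_int \<upsilon> \<mu>) \<phi>" "\<mu>' = reset \<mu> r" by (auto simp: zreset_def)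
      have "ta_run A (l0, (\<lambda>_. 0)) (l, add_int \<upsilon> \<mu>)" using step(3) R_edge(1) m(1) by auto
      moreover have "ta_step A (l, add_int \<upsilon> \<mu>) (l', add_int (reset \<upsilon> r) \<mu>')"
        using ta_disc[OF R_edge(3) m(2)] m(3) by (simp add: add_int_reset)
      ultimately show "ta_run A (l0, (\<lambda>_. 0)) (l', add_int (reset \<upsilon> r) \<mu>')"
        unfolding ta_run_def by (rule rtranclp.rtrancl_into_rtrancl)
    qed
  qed
qed

theorem mainTheorem7:
  fixes A :: "('l, 'c::finite) ta" and l0 l :: 'l
  assumes "ta_wf A" and "l0 \<in> locs A" and "l \<in> locs A"
  shows "{\<nu>. (\<forall>x. \<nu> x \<ge> 0) \<and> ta_run A (l0, (\<lambda>_. 0)) (l, \<nu>)} =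
    (\<Union>Z \<in> zones1. \<Union>\<gamma> \<in> (UNIV :: 'c set set).
       {add_int \<upsilon> \<mu> | \<mu> \<upsilon>. \<mu> \<in> Z \<and>
          R_reach A (l0, (\<lambda>_. 0), {(\<lambda>_. 0)}, \<gamma>) (l, \<upsilon>, Z, {})})"
proof
  show "{\<nu>. (\<forall>x. \<nu> x \<ge> 0) \<and> ta_run A (l0, (\<lambda>_. 0)) (l, \<nu>)} \<subseteq> (\<Union>Z \<in> zones1. \<Union>\<gamma> \<in> (UNIV :: 'c set set).
       {add_int \<upsilon> \<mu> | \<mu> \<upsilon>. \<mu> \<in> Z \<and>
          R_reach A (l0, (\<lambda>_. 0), {(\<lambda>_. 0)}, \<gamma>) (l, \<upsilon>, Z, {})})"
  proof
    fix \<nu> assume "\<nu> \<in> {\<nu>. (\<forall>x. \<nu> x \<ge> 0) \<and> ta_run A (l0, (\<lambda>_. 0)) (l, \<nu>)}"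
    then have "ta_run A (l0, (\<lambda>_. 0)) (l, \<nu>)" by simp
    from sim[OF this] obtain \<gamma> \<upsilon> Z \<mu> where "R_reach A (l0, (\<lambda>_. 0), {(\<lambda>_. 0)}, \<gamma>) (l, \<upsilon>, Z, {})"
      "good Z" "\<mu> \<in> Z" "\<nu> = add_int \<upsilon> \<mu>" by auto
    then show "\<nu> \<in> (\<Union>Z \<in> zones1. \<Union>\<gamma> \<in> (UNIV :: 'c set set).
       {add_int \<upsilon> \<mu> | \<mu> \<upsilon>. \<mu> \<in> Z \<and>
          R_reach A (l0, (\<lambda>_. 0), {(\<lambda>_. 0)}, \<gamma>) (l, \<upsilon>, Z, {})})" using good_zones1 by blast
  qed
next
  show "(\<Union>Z \<in> zones1. \<Union>\<gamma> \<in> (UNIV :: 'c set set).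
       {add_int \<upsilon> \<mu> | \<mu> \<upsilon>. \<mu> \<in> Z \<and>
          R_reach A (l0, (\<lambda>_. 0), {(\<lambda>_. 0)}, \<gamma>) (l, \<upsilon>, Z, {})}) \<subseteq> {\<nu>. (\<forall>x. \<nu> x \<ge> 0) \<and> ta_run A (l0, (\<lambda>_. 0)) (l, \<nu>)}"
  proof
    fix \<nu> assume "\<nu> \<in> (\<Union>Z \<in> zones1. \<Union>\<gamma> \<in> (UNIV :: 'c set set).
       {add_int \<upsilon> \<mu> | \<mu> \<upsilon>. \<mu> \<in> Z \<and>
          R_reach A (l0, (\<lambda>_. 0), {(\<lambda>_. 0)}, \<gamma>) (l, \<upsilon>, Z, {})})"
    then obtain Z \<gamma> \<upsilon> \<mu> where m: "\<mu> \<in> Z" "R_reach A (l0, (\<lambda>_. 0), {(\<lambda>_. 0)}, \<gamma>) (l, \<upsilon>, Z, {})"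
      "\<nu> = add_int \<upsilon> \<mu>" by blast
    have "Z \<subseteq> unit_box \<and> (\<forall>\<mu>\<in>Z. ta_run A (l0, (\<lambda>_. 0)) (l, add_int \<upsilon> \<mu>))"
      using sound[OF m(2)] by simp
    then show "\<nu> \<in> {\<nu>. (\<forall>x. \<nu> x \<ge> 0) \<and> ta_run A (l0, (\<lambda>_. 0)) (l, \<nu>)}"
      using m by (auto simp: unit_box_def add_int_def)
  qed
qed

end
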